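(* Let $N^{[0]}$ be a $C^0$ net on the grid $T^{[0]}$ with lines $s^{[0]}_i=t^{[0]}_i=i$, $i\in\mathbb{Z}$, having the BMSDD property with constant $L$, and let $N^{[k]}$ on grids $T^{[k]}$ (lines $s^{[k]}_i$, $t^{[k]}_j$), $k\ge0$, be generated by the corner cutting algorithm for nets of functions (described in the context) with weights $\boldsymbol{\gamma}^{[s],[k]},\boldsymbol{\gamma}^{[t],[k]}\in\mathscr{W}$. Then for every $k\ge0$, $$\|\mathcal{C}(N^{[k+1]})-\mathcal{C}(N^{[k]})\|_\infty\le 3^{k+1}L\,\frac{h_s^{[k+1]}h_t^{[k+1]}}{4},$$ where $h_s^{[k+1]}=\sup_{i\in\mathbb{Z}}(s^{[k+1]}_{i+1}-s^{[k+1]}_i)$, $h_t^{[k+1]}=\sup_{i\in\mathbb{Z}}(t^{[k+1]}_{i+1}-t^{[k+1]}_i)$, and the norm on the left is the supremum over $\mathbb{R}^2$.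
   Context: $\mathscr{W}$ is the set of pairs $(\boldsymbol{\alpha},\boldsymbol{\beta})$ of real bi-infinite sequences with $\inf_i\min\{\alpha_i,1-\beta_i,\beta_i-\alpha_i\}>0$. For strictly increasing bi-infinite real sequences $(s_i)$, $(t_j)$, unbounded above and below, the grid is $T=\bigcup_i\{s_i\}\times\mathbb{R}\cup\bigcup_j\mathbb{R}\times\{t_j\}$. A net $N(T)$ is a function on $T$ with values in $\mathbb{R}^m$; it is $C^0$ if all u-functions $s\mapsto N(s,t_j)$, $t\mapsto N(s_i,t)$ are continuous. The piecewise Coons patch $\mathcal{C}(N)$ is defined on each rectangle $[s_i,s_{i+1}]\times[t_j,t_{j+1}]$, with $h_1=s_{i+1}-s_i$, $h_2=t_{j+1}-t_j$, by $\mathcal{C}(N)(s,t)=\frac{s_{i+1}-s}{h_1}N(s_i,t)+\frac{s-s_i}{h_1}N(s_{i+1},t)+\frac{t_{j+1}-t}{h_2}N(s,t_j)+\frac{t-t_j}{h_2}N(s,t_{j+1})-B(s,t)$, with $B(s,t)=\frac{s_{i+1}-s}{h_1}\big(\frac{t_{j+1}-t}{h_2}N(s_i,t_j)+\frac{t-t_j}{h_2}N(s_i,t_{j+1})\big)+\frac{s-s_i}{h_1}\big(\frac{t_{j+1}-t}{h_2}N(s_{i+1},t_j)+\frac{t-t_j}{h_2}N(s_{i+1},t_{j+1})\big)$. Algorithm: given $N^{[k]}$ on grid $T^{[k]}$ with lines $s^{[k]}_i,t^{[k]}_j$, set $s^{[k+1]}_{2i}=(1-\alpha^{[s],[k]}_i)s^{[k]}_i+\alpha^{[s],[k]}_is^{[k]}_{i+1}$,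 $s^{[k+1]}_{2i+1}=(1-\beta^{[s],[k]}_i)s^{[k]}_i+\beta^{[s],[k]}_is^{[k]}_{i+1}$, and analogously for $t^{[k+1]}$ with $\boldsymbol{\gamma}^{[t],[k]}=(\boldsymbol{\alpha}^{[t],[k]},\boldsymbol{\beta}^{[t],[k]})$; $T^{[k+1]}$ is the grid with these lines and $N^{[k+1]}=\mathcal{C}(N^{[k]})|_{T^{[k+1]}}$. For $\sigma_1\ne\sigma_2$, $\tau_1\ne\tau_2$, $[\sigma_1,\sigma_2;\tau_1,\tau_2]N=\frac{N(\sigma_1,\tau_1)+N(\sigma_2,\tau_2)-N(\sigma_2,\tau_1)-N(\sigma_1,\tau_2)}{(\sigma_1-\sigma_2)(\tau_1-\tau_2)}$; a net on a grid has the BMSDD property with constant $L$ if $\|[\sigma_1,\sigma_2;\tau_1,\tau_2]N\|_\infty\le L$ whenever all four points $(\sigma_i,\tau_j)$ lie on the grid. *)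

theory Defs
  imports "HOL-Analysis.Analysis"
begin

definition grid_lines :: "(int \<Rightarrow> real) \<Rightarrow> bool" where
  "grid_lines s \<longleftrightarrow> (\<forall>i. s i < s (i + 1)) \<and> (\<forall>x. \<exists>i. s i > x) \<and> (\<forall>x. \<exists>i. s i < x)"

definition grid :: "(int \<Rightarrow> real) \<Rightarrow> (int \<Rightarrow> real) \<Rightarrow> (real \<times> real) set" where
  "grid s t = {(x, y). (\<exists>i. x = s i) \<or> (\<exists>j. y = t j)}"

definition weights_W :: "(int \<Rightarrow> real) \<Rightarrow> (int \<Rightarrow> real) \<Rightarrow> bool" where
  "weights_W \<alpha> \<beta> \<longleftrightarrow> (\<exists>\<delta>>0. \<forall>i. \<delta> \<le> \<alpha> i \<and> \<delta> \<le> 1 - \<beta> i \<and> \<delta> \<le> \<beta> i - \<alpha> i)"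

text \<open>A net (values only relevant on the grid) is C^0 if all u-functions are continuous.\<close>
definition net_C0 :: "(int \<Rightarrow> real) \<Rightarrow> (int \<Rightarrow> real) \<Rightarrow> (real \<times> real \<Rightarrow> 'a::real_normed_vector) \<Rightarrow> bool" where
  "net_C0 s t N \<longleftrightarrow> (\<forall>j. continuous_on UNIV (\<lambda>x. N (x, t j))) \<and> (\<forall>i. continuous_on UNIV (\<lambda>y. N (s i, y)))"

definition div_diff :: "real \<Rightarrow> real \<Rightarrow> real \<Rightarrow> real \<Rightarrow> (real \<times> real \<Rightarrow> 'a::real_normed_vector) \<Rightarrow> 'a" where
  "div_diff \<sigma>1 \<sigma>2 \<tau>1 \<tau>2 N =
     (1 / ((\<sigma>1 - \<sigma>2) * (\<tau>1 - \<tau>2))) *\<^sub>R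
       (N (\<sigma>1, \<tau>1) + N (\<sigma>2, \<tau>2) - N (\<sigma>2, \<tau>1) - N (\<sigma>1, \<tau>2))"

definition BMSDD :: "(int \<Rightarrow> real) \<Rightarrow> (int \<Rightarrow> real) \<Rightarrow> (real \<times> real \<Rightarrow> 'a::euclidean_space) \<Rightarrow> real \<Rightarrow> bool" where
  "BMSDD s t N L \<longleftrightarrow>
     (\<forall>\<sigma>1 \<sigma>2 \<tau>1 \<tau>2. \<sigma>1 \<noteq> \<sigma>2 \<and> \<tau>1 \<noteq> \<tau>2 \<and>
        (\<sigma>1, \<tau>1) \<in> grid s t \<and> (\<sigma>1, \<tau>2) \<in> grid s t \<and>
        (\<sigma>2, \<tau>1) \<in> grid s t \<and> (\<sigma>2, \<tau>2) \<in> grid s t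
        \<longrightarrow> infnorm (div_diff \<sigma>1 \<sigma>2 \<tau>1 \<tau>2 N) \<le> L)"

definition cell_idx :: "(int \<Rightarrow> real) \<Rightarrow> real \<Rightarrow> int" where
  "cell_idx s x = (THE i. s i \<le> x \<and> x < s (i + 1))"

text \<open>Piecewise Coons patch (on cell boundaries adjacent patches agree).\<close>
definition coons :: "(int \<Rightarrow> real) \<Rightarrow> (int \<Rightarrow> real) \<Rightarrow> (real \<times> real \<Rightarrow> 'a::real_vector) \<Rightarrow> real \<times> real \<Rightarrow> 'a" where
  "coons s t N = (\<lambda>(x, y).
     let i = cell_idx s x; j = cell_idx t y;
         h1 = s (i + 1) - s i; h2 = t (j + 1) - t j;
         a0 = (s (i + 1) - x) / h1; a1 = (x - s i) / h1;
         b0 = (t (j + 1) - y) / h2; b1 = (y - t j) / h2;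
         B = a0 *\<^sub>R (b0 *\<^sub>R N (s i, t j) + b1 *\<^sub>R N (s i, t (j + 1)))
           + a1 *\<^sub>R (b0 *\<^sub>R N (s (i + 1), t j) + b1 *\<^sub>R N (s (i + 1), t (j + 1)))
     in a0 *\<^sub>R N (s i, y) + a1 *\<^sub>R N (s (i + 1), y)
        + b0 *\<^sub>R N (x, t j) + b1 *\<^sub>R N (x, t (j + 1)) - B)"

primrec cc_lines :: "(nat \<Rightarrow> int \<Rightarrow> real) \<Rightarrow> (nat \<Rightarrow> int \<Rightarrow> real) \<Rightarrow> (int \<Rightarrow> real) \<Rightarrow> nat \<Rightarrow> int \<Rightarrow> real" where
  "cc_lines \<alpha> \<beta> s0 0 = s0"
| "cc_lines \<alpha> \<beta> s0 (Suc k) = (\<lambda>n. let i = n div 2; s = cc_lines \<alpha> \<beta> s0 k in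
      if even n then (1 - \<alpha> k i) * s i + \<alpha> k i * s (i + 1)
      else (1 - \<beta> k i) * s i + \<beta> k i * s (i + 1))"

text \<open>Nets N^[k]: N^[k+1] = C(N^[k]) restricted to T^[k+1] (values off the grid are
  irrelevant; we keep the whole Coons patch).\<close>
primrec cc_net :: "(nat \<Rightarrow> int \<Rightarrow> real) \<Rightarrow> (nat \<Rightarrow> int \<Rightarrow> real) \<Rightarrow> (nat \<Rightarrow> int \<Rightarrow> real) \<Rightarrow> (nat \<Rightarrow> int \<Rightarrow> real)
    \<Rightarrow> (int \<Rightarrow> real) \<Rightarrow> (int \<Rightarrow> real) \<Rightarrow> (real \<times> real \<Rightarrow> 'a::real_vector) \<Rightarrow> nat \<Rightarrow> real \<times> real \<Rightarrow> 'a" where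
  "cc_net \<alpha>s \<beta>s \<alpha>t \<beta>t s0 t0 N0 0 = N0"
| "cc_net \<alpha>s \<beta>s \<alpha>t \<beta>t s0 t0 N0 (Suc k) =
     coons (cc_lines \<alpha>s \<beta>s s0 k) (cc_lines \<alpha>t \<beta>t t0 k) (cc_net \<alpha>s \<beta>s \<alpha>t \<beta>t s0 t0 N0 k)"

definition max_step :: "(int \<Rightarrow> real) \<Rightarrow> real" where
  "max_step s = (SUP i. s (i + 1) - s i)"

end

theory Submission
  imports Defs
begin


definition rectd :: "(real \<times> real \<Rightarrow> real) \<Rightarrow> real \<Rightarrow> real \<Rightarrow> real \<Rightarrow> real \<Rightarrow> real" where
  "rectd F a b c d = F (a, c) + F (b, d) - F (b, c) - F (a, d)"

definition Ebound :: "(real \<times> real \<Rightarrow> real) \<Rightarrow> real \<Rightarrow> bool" where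
  "Ebound F M \<longleftrightarrow> (\<forall>a b c d. \<bar>rectd F a b c d\<bar> \<le> M * \<bar>a - b\<bar> * \<bar>c - d\<bar>)"

definition Gbound :: "(int \<Rightarrow> real) \<Rightarrow> (int \<Rightarrow> real) \<Rightarrow> (real \<times> real \<Rightarrow> real) \<Rightarrow> real \<Rightarrow> bool" where
  "Gbound s t F M \<longleftrightarrow> (\<forall>i1 i2 c d. \<bar>rectd F (s i1) (s i2) c d\<bar> \<le> M * \<bar>s i1 - s i2\<bar> * \<bar>c - d\<bar>)
      \<and> (\<forall>a b j1 j2. \<bar>rectd F a b (t j1) (t j2)\<bar> \<le> M * \<bar>a - b\<bar> * \<bar>t j1 - t j2\<bar>)"

lemma grid_mono:
  assumes "grid_lines s" "i < j" shows "s i < s j"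
proof -
  have step: "\<And>i. s i < s (i+1)" using assms(1) by (simp add: grid_lines_def)
  have "\<And>n::nat. s i < s (i + 1 + int n)"
  proof -
    fix n :: nat show "s i < s (i + 1 + int n)"
    proof (induction n)
      case 0 then show ?case using step by simp
    next
      case (Suc n)
      have "s (i + 1 + int n) < s (i + 1 + int n + 1)" by (rule step)
      then show ?case using Suc by (simp add: add.assoc)
    qed
  qed
  from this[of "nat (j - i - 1)"] show ?thesis using assms(2) by simp
qed

lemma grid_mono_le:
  assumes "grid_lines s" "i \<le> j" shows "s i \<le> s j"
  using grid_mono[OF assms(1), of i j] assms(2) by (cases "i = j") auto

lemma cell_exists:
  assumes "grid_lines s" shows "\<exists>i. s i \<le> x \<and> x < s (i+1)"
proof -
  obtain i0 where i0: "s i0 > x" using assms unfolding grid_lines_def by blast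
  obtain i1 where i1: "s i1 < x" using assms unfolding grid_lines_def by blast
  have "i1 < i0"
  proof (rule ccontr)
    assume "\<not> i1 < i0"
    then have "s i0 \<le> s i1" using grid_mono_le[OF assms] by simp
    then show False using i0 i1 by simp
  qed
  then have ex: "\<exists>n::nat. x < s (i1 + int n + 1)"
    using i0 by (intro exI[of _ "nat (i0 - i1 - 1)"]) simp
  define n where "n = (LEAST n::nat. x < s (i1 + int n + 1))"
  have n1: "x < s (i1 + int n + 1)" using LeastI_ex[OF ex] n_def by simp
  have n2: "s (i1 + int n) \<le> x"
  proof (cases n)
    case 0 then show ?thesis using i1 by simp
  next
    case (Suc m)
    have "m < n" using Suc by simp
    then have "\<not> x < s (i1 + int m + 1)" using not_less_Least n_def by blast
    moreover have "i1 + int n = i1 + int m + 1" using Suc by simp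
    ultimately show ?thesis by (metis linorder_not_less)
  qed
  show ?thesis using n1 n2 by (intro exI[of _ "i1 + int n"]) simp
qed

lemma cell_unique:
  assumes "grid_lines s" "s i \<le> x" "x < s (i+1)" "s j \<le> x" "x < s (j+1)"
  shows "i = j"
proof (rule ccontr)
  assume "i \<noteq> j"
  then consider "i + 1 \<le> j" | "j + 1 \<le> i" by linarith
  then show False
  proof cases
    case 1 then show False using grid_mono_le[OF assms(1) 1] assms by simp
  next
    case 2 then show False using grid_mono_le[OF assms(1) 2] assms by simp
  qed
qed

lemma cell_idx_eq:
  assumes "grid_lines s" "s i \<le> x" "x < s (i+1)"
  shows "cell_idx s x = i"
  unfolding cell_idx_def
  using cell_unique[OF assms(1)] assms by (intro the_equality) blast+

lemma cell_idx_prop: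
  assumes "grid_lines s"
  shows "s (cell_idx s x) \<le> x \<and> x < s (cell_idx s x + 1)"
proof -
  obtain i where "s i \<le> x" "x < s (i+1)" using cell_exists[OF assms] by blast
  then show ?thesis using cell_idx_eq[OF assms] by simp
qed

definition patch :: "(int \<Rightarrow> real) \<Rightarrow> (int \<Rightarrow> real) \<Rightarrow> (real \<times> real \<Rightarrow> real) \<Rightarrow> int \<Rightarrow> int \<Rightarrow> real \<Rightarrow> real \<Rightarrow> real" where
 "patch s t N i j x y = (let h1 = s (i + 1) - s i; h2 = t (j + 1) - t j;
         a0 = (s (i + 1) - x) / h1; a1 = (x - s i) / h1;
         b0 = (t (j + 1) - y) / h2; b1 = (y - t j) / h2
     in a0 * N (s i, y) + a1 * N (s (i + 1), y) + b0 * N (x, t j) + b1 * N (x, t (j + 1))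
        - (a0 * (b0 * N (s i, t j) + b1 * N (s i, t (j + 1))) + a1 * (b0 * N (s (i + 1), t j) + b1 * N (s (i + 1), t (j + 1)))))"

lemma coons_patch: "coons s t N (x,y) = patch s t N (cell_idx s x) (cell_idx t y) x y"
  by (simp add: coons_def patch_def Let_def)

lemma patch_interp:
  assumes "grid_lines s" "grid_lines t"
  shows "patch s t N i j (s i) y = N (s i, y)"
    and "patch s t N i j (s (i+1)) y = N (s (i+1), y)"
    and "patch s t N i j x (t j) = N (x, t j)"
    and "patch s t N i j x (t (j+1)) = N (x, t (j+1))"
proof -
  have h1: "s (i+1) - s i \<noteq> 0" and h2: "t (j+1) - t j \<noteq> 0"
    using assms by (auto simp: grid_lines_def dest: spec[of _ i] spec[of _ j])
  show "patch s t N i j (s i) y = N (s i, y)"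
    using h1 by (simp add: patch_def Let_def)
  show "patch s t N i j (s (i+1)) y = N (s (i+1), y)"
    using h1 by (simp add: patch_def Let_def)
  show "patch s t N i j x (t j) = N (x, t j)"
    using h2 by (simp add: patch_def Let_def)
  show "patch s t N i j x (t (j+1)) = N (x, t (j+1))"
    using h2 by (simp add: patch_def Let_def)
qed



lemma coons_closed:
  assumes s: "grid_lines s" and t: "grid_lines t"
    and x: "s i \<le> x" "x \<le> s (i+1)" and y: "t j \<le> y" "y \<le> t (j+1)"
  shows "coons s t N (x,y) = patch s t N i j x y"
proof (cases "x = s (i+1)")
  case True
  have "s (i+1) < s (i+1+1)" using s unfolding grid_lines_def by blast
  then have "cell_idx s x = i+1" using True cell_idx_eq[OF s, of "i+1" x] by simp
  then have "coons s t N (x,y) = N (x, y)"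
    using True patch_interp(1)[OF s t] coons_patch by metis
  moreover have "patch s t N i j x y = N (x,y)"
    using True patch_interp(2)[OF s t] by metis
  ultimately show ?thesis by simp
next
  case Fx: False
  show ?thesis
  proof (cases "y = t (j+1)")
    case True
    have "t (j+1) < t (j+1+1)" using t unfolding grid_lines_def by blast
    then have "cell_idx t y = j+1" using True cell_idx_eq[OF t, of "j+1" y] by simp
    then have "coons s t N (x,y) = N (x, y)"
      using True patch_interp(3)[OF s t] coons_patch by metis
    moreover have "patch s t N i j x y = N (x,y)"
      using True patch_interp(4)[OF s t] by metis
    ultimately show ?thesis by simp
  next
    case False
    have "cell_idx s x = i" using cell_idx_eq[OF s] x Fx by simp
    moreover have "cell_idx t y = j" using cell_idx_eq[OF t] y False by simp
    ultimately show ?thesis using coons_patch by metis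
  qed
qed

lemma patch_rect_poly:
  fixes a b c d p q :: real
  shows "(((b - x1) * p) * N (a, y1) + ((x1 - a) * p) * N (b, y1) + ((d - y1) * q) * N (x1, c) + ((y1 - c) * q) * N (x1, d)
        - (((b - x1) * p) * (((d - y1) * q) * N (a, c) + ((y1 - c) * q) * N (a, d)) + ((x1 - a) * p) * (((d - y1) * q) * N (b, c) + ((y1 - c) * q) * N (b, d))))
       + (((b - x2) * p) * N (a, y2) + ((x2 - a) * p) * N (b, y2) + ((d - y2) * q) * N (x2, c) + ((y2 - c) * q) * N (x2, d)
        - (((b - x2) * p) * (((d - y2) * q) * N (a, c) + ((y2 - c) * q) * N (a, d)) + ((x2 - a) * p) * (((d - y2) * q) * N (b, c) + ((y2 - c) * q) * N (b, d))))
       - (((b - x2) * p) * N (a, y1) + ((x2 - a) * p) * N (b, y1) + ((d - y1) * q) * N (x2, c) + ((y1 - c) * q) * N (x2, d)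
        - (((b - x2) * p) * (((d - y1) * q) * N (a, c) + ((y1 - c) * q) * N (a, d)) + ((x2 - a) * p) * (((d - y1) * q) * N (b, c) + ((y1 - c) * q) * N (b, d))))
       - (((b - x1) * p) * N (a, y2) + ((x1 - a) * p) * N (b, y2) + ((d - y2) * q) * N (x1, c) + ((y2 - c) * q) * N (x1, d)
        - (((b - x1) * p) * (((d - y2) * q) * N (a, c) + ((y2 - c) * q) * N (a, d)) + ((x1 - a) * p) * (((d - y2) * q) * N (b, c) + ((y2 - c) * q) * N (b, d))))
     = (x1 - x2) * p * (N (b, y1) + N (a, y2) - N (a, y1) - N (b, y2))
       + (y1 - y2) * q * (N (x1, d) + N (x2, c) - N (x2, d) - N (x1, c))
       - (x1 - x2) * (y1 - y2) * p * q * (N (b, d) + N (a, c) - N (a, d) - N (b, c))"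
  by (simp add: algebra_simps)

lemma patch_rect:
  assumes "s (i+1) \<noteq> s i" "t (j+1) \<noteq> t j"
  shows "patch s t N i j x1 y1 + patch s t N i j x2 y2 - patch s t N i j x2 y1 - patch s t N i j x1 y2 =
     (x1 - x2) / (s (i+1) - s i) * rectd N (s (i+1)) (s i) y1 y2
     + (y1 - y2) / (t (j+1) - t j) * rectd N x1 x2 (t (j+1)) (t j)
     - (x1 - x2) * (y1 - y2) / ((s (i+1) - s i) * (t (j+1) - t j)) * rectd N (s (i+1)) (s i) (t (j+1)) (t j)"
  unfolding patch_def Let_def rectd_def divide_inverse inverse_mult_distrib mult.assoc[symmetric]
  by (rule patch_rect_poly)



lemma scale_bound:
  fixes h d R M c :: real
  assumes "h > 0" "\<bar>R\<bar> \<le> M * h * c"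
  shows "\<bar>d / h * R\<bar> \<le> M * \<bar>d\<bar> * c"
proof -
  have "\<bar>d / h * R\<bar> = \<bar>d\<bar> / h * \<bar>R\<bar>" using assms(1) by (simp add: abs_mult)
  also have "\<dots> \<le> \<bar>d\<bar> / h * (M * h * c)"
    using assms by (intro mult_left_mono) auto
  also have "\<dots> = M * \<bar>d\<bar> * c" using assms(1) by (simp add: field_simps)
  finally show ?thesis .
qed

lemma cell_bound:
  assumes s: "grid_lines s" and t: "grid_lines t" and G: "Gbound s t N M"
    and x: "s i \<le> x1" "x1 \<le> s (i+1)" "s i \<le> x2" "x2 \<le> s (i+1)"
    and y: "t j \<le> y1" "y1 \<le> t (j+1)" "t j \<le> y2" "y2 \<le> t (j+1)"
  shows "\<bar>rectd (coons s t N) x1 x2 y1 y2\<bar> \<le> 3 * M * \<bar>x1 - x2\<bar> * \<bar>y1 - y2\<bar>"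
proof -
  have h1: "s (i+1) - s i > 0" using s unfolding grid_lines_def by simp
  have h2: "t (j+1) - t j > 0" using t unfolding grid_lines_def by simp
  have eq: "rectd (coons s t N) x1 x2 y1 y2 =
     (x1 - x2) / (s (i+1) - s i) * rectd N (s (i+1)) (s i) y1 y2
     + (y1 - y2) / (t (j+1) - t j) * rectd N x1 x2 (t (j+1)) (t j)
     - ((x1 - x2) * (y1 - y2)) / ((s (i+1) - s i) * (t (j+1) - t j)) * rectd N (s (i+1)) (s i) (t (j+1)) (t j)"
    unfolding rectd_def
    using coons_closed[OF s t] x y patch_rect[of s i t j N x1 y1 x2 y2] h1 h2
    by (simp add: rectd_def)
  have G1: "\<bar>rectd N (s (i+1)) (s i) c d\<bar> \<le> M * (s (i+1) - s i) * \<bar>c - d\<bar>" for c d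
    using G h1 unfolding Gbound_def by (metis abs_of_pos)
  have G2: "\<bar>rectd N a b (t (j+1)) (t j)\<bar> \<le> M * \<bar>a - b\<bar> * (t (j+1) - t j)" for a b
    using G h2 unfolding Gbound_def by (metis abs_of_pos)
  have T1: "\<bar>(x1 - x2) / (s (i+1) - s i) * rectd N (s (i+1)) (s i) y1 y2\<bar> \<le> M * \<bar>x1 - x2\<bar> * \<bar>y1 - y2\<bar>"
    using scale_bound[OF h1 G1] .
  have T2: "\<bar>(y1 - y2) / (t (j+1) - t j) * rectd N x1 x2 (t (j+1)) (t j)\<bar> \<le> M * \<bar>y1 - y2\<bar> * \<bar>x1 - x2\<bar>"
  proof -
    have "\<bar>rectd N x1 x2 (t (j+1)) (t j)\<bar> \<le> M * (t (j+1) - t j) * \<bar>x1 - x2\<bar>"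
      using G2[of x1 x2] by (simp add: mult_ac)
    from scale_bound[OF h2 this] show ?thesis .
  qed
  have G3: "\<bar>rectd N (s (i+1)) (s i) (t (j+1)) (t j)\<bar> \<le> M * ((s (i+1) - s i) * (t (j+1) - t j)) * 1"
    using G1[of "t (j+1)" "t j"] h2 by (simp add: mult.assoc)
  have T3: "\<bar>((x1 - x2) * (y1 - y2)) / ((s (i+1) - s i) * (t (j+1) - t j)) * rectd N (s (i+1)) (s i) (t (j+1)) (t j)\<bar>
     \<le> M * \<bar>(x1 - x2) * (y1 - y2)\<bar> * 1"
    using scale_bound[OF _ G3] h1 h2 by simp
  show ?thesis
  proof -
    have tri: "\<bar>A + B - C\<bar> \<le> \<bar>A\<bar> + \<bar>B\<bar> + \<bar>C\<bar>" for A B C :: real by arith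
    have e1: "M * \<bar>y1 - y2\<bar> * \<bar>x1 - x2\<bar> = M * \<bar>x1 - x2\<bar> * \<bar>y1 - y2\<bar>" by (simp add: mult_ac)
    have e2: "M * \<bar>(x1 - x2) * (y1 - y2)\<bar> * 1 = M * \<bar>x1 - x2\<bar> * \<bar>y1 - y2\<bar>" by (simp add: abs_mult mult_ac)
    show ?thesis unfolding eq
      using T1 T2 T3 e1 e2 tri[of "(x1 - x2) / (s (i+1) - s i) * rectd N (s (i+1)) (s i) y1 y2"
        "(y1 - y2) / (t (j+1) - t j) * rectd N x1 x2 (t (j+1)) (t j)"
        "((x1 - x2) * (y1 - y2)) / ((s (i+1) - s i) * (t (j+1) - t j)) * rectd N (s (i+1)) (s i) (t (j+1)) (t j)"]
      by linarith
  qed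
qed

lemma glob:
  fixes g :: "real \<Rightarrow> real"
  assumes s: "grid_lines s"
    and loc: "\<And>i x y. s i \<le> x \<Longrightarrow> x \<le> s (i+1) \<Longrightarrow> s i \<le> y \<Longrightarrow> y \<le> s (i+1) \<Longrightarrow> \<bar>g x - g y\<bar> \<le> K * \<bar>x - y\<bar>"
  shows "\<bar>g x - g y\<bar> \<le> K * \<bar>x - y\<bar>"
proof -
  have main: "\<forall>i x y. x \<le> y \<and> s i \<le> x \<and> y \<le> s (i + int n + 1) \<longrightarrow> \<bar>g x - g y\<bar> \<le> K * \<bar>x - y\<bar>" for n :: nat
  proof (induction n)
    case 0 show ?case
    proof (intro allI impI)
      fix i x y assume "x \<le> y \<and> s i \<le> x \<and> y \<le> s (i + int 0 + 1)"
      then show "\<bar>g x - g y\<bar> \<le> K * \<bar>x - y\<bar>" using loc[of i x y] by auto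
    qed
  next
    case (Suc n)
    show ?case
    proof (intro allI impI)
      fix i x y assume H: "x \<le> y \<and> s i \<le> x \<and> y \<le> s (i + int (Suc n) + 1)"
      define m where "m = s (i + int n + 1)"
      have hm: "s (i + int n + 1 + 1) = s (i + int (Suc n) + 1)" by (rule arg_cong[where f=s]) simp
      have im: "s i \<le> m" unfolding m_def using grid_mono_le[OF s, of i "i + int n + 1"] by simp
      show "\<bar>g x - g y\<bar> \<le> K * \<bar>x - y\<bar>"
      proof (cases "y \<le> m")
        case True then show ?thesis using Suc.IH H m_def by blast
      next
        case False
        show ?thesis
        proof (cases "m \<le> x")
          case True
          then show ?thesis using loc[of "i + int n + 1" x y] H m_def hm by auto
        next
          case False2: False
          have 1: "\<bar>g x - g m\<bar> \<le> K * \<bar>x - m\<bar>" using Suc.IH[THEN spec[of _ i], THEN spec[of _ x], THEN spec[of _ m]] H m_def False2 by auto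
          have 2: "\<bar>g m - g y\<bar> \<le> K * \<bar>m - y\<bar>"
            using loc[of "i + int n + 1" m y] H m_def hm False by auto
          have "\<bar>g x - g y\<bar> \<le> \<bar>g x - g m\<bar> + \<bar>g m - g y\<bar>" by arith
          also have "\<dots> \<le> K * \<bar>x - m\<bar> + K * \<bar>m - y\<bar>" using 1 2 by linarith
          also have "\<dots> = K * \<bar>x - y\<bar>"
            using False False2 H by (simp add: abs_if algebra_simps)
          finally show ?thesis .
        qed
      qed
    qed
  qed
  have ord: "\<bar>g x - g y\<bar> \<le> K * \<bar>x - y\<bar>" if xy: "x \<le> y" for x y
  proof -
    define i where "i = cell_idx s x"
    define j where "j = cell_idx s y"
    have ci: "s i \<le> x" "x < s (i+1)" using cell_idx_prop[OF s] i_def by auto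
    have cj: "s j \<le> y" "y < s (j+1)" using cell_idx_prop[OF s] j_def by auto
    have "i \<le> j"
    proof (rule ccontr)
      assume "\<not> i \<le> j"
      then have "j + 1 \<le> i" by simp
      then have "s (j+1) \<le> s i" using grid_mono_le[OF s] by simp
      then show False using ci cj xy by simp
    qed
    then have "j = i + int (nat (j - i))" by simp
    then have "y \<le> s (i + int (nat (j - i)) + 1)" using cj by (metis less_imp_le)
    then show ?thesis using main[of "nat (j - i)"] xy ci by blast
  qed
  show ?thesis
  proof (cases "x \<le> y")
    case True then show ?thesis using ord by blast
  next
    case False then show ?thesis using ord[of y x] by (simp add: abs_minus_commute)
  qed
qed

lemma coons_Ebound:
  assumes s: "grid_lines s" and t: "grid_lines t" and G: "Gbound s t N M"
  shows "Ebound (coons s t N) (3 * M)"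
proof -
  let ?C = "coons s t N"
  have step1: "\<bar>rectd ?C x1 x2 y1 y2\<bar> \<le> 3 * M * \<bar>x1 - x2\<bar> * \<bar>y1 - y2\<bar>"
    if x: "s i \<le> x1" "x1 \<le> s (i+1)" "s i \<le> x2" "x2 \<le> s (i+1)" for i x1 x2 y1 y2
  proof -
    let ?g = "\<lambda>y. ?C (x1, y) - ?C (x2, y)"
    have "\<bar>?g y1 - ?g y2\<bar> \<le> (3 * M * \<bar>x1 - x2\<bar>) * \<bar>y1 - y2\<bar>"
    proof (rule glob[OF t])
      fix j y y' assume "t j \<le> y" "y \<le> t (j+1)" "t j \<le> y'" "y' \<le> t (j+1)"
      then have "\<bar>rectd ?C x1 x2 y y'\<bar> \<le> 3 * M * \<bar>x1 - x2\<bar> * \<bar>y - y'\<bar>"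
        using cell_bound[OF s t G x] by blast
      then show "\<bar>?g y - ?g y'\<bar> \<le> (3 * M * \<bar>x1 - x2\<bar>) * \<bar>y - y'\<bar>"
        by (simp add: rectd_def algebra_simps)
    qed
    then show ?thesis by (simp add: rectd_def algebra_simps)
  qed
  show ?thesis unfolding Ebound_def
  proof (intro allI)
    fix x1 x2 y1 y2
    let ?g = "\<lambda>x. ?C (x, y1) - ?C (x, y2)"
    have "\<bar>?g x1 - ?g x2\<bar> \<le> (3 * M * \<bar>y1 - y2\<bar>) * \<bar>x1 - x2\<bar>"
    proof (rule glob[OF s])
      fix i x x' assume "s i \<le> x" "x \<le> s (i+1)" "s i \<le> x'" "x' \<le> s (i+1)"
      then have "\<bar>rectd ?C x x' y1 y2\<bar> \<le> 3 * M * \<bar>x - x'\<bar> * \<bar>y1 - y2\<bar>"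
        using step1 by blast
      then show "\<bar>?g x - ?g x'\<bar> \<le> (3 * M * \<bar>y1 - y2\<bar>) * \<bar>x - x'\<bar>"
        by (simp add: rectd_def algebra_simps)
    qed
    then show "\<bar>rectd ?C x1 x2 y1 y2\<bar> \<le> 3 * M * \<bar>x1 - x2\<bar> * \<bar>y1 - y2\<bar>"
      by (simp add: rectd_def algebra_simps)
  qed
qed



lemma err_alg:
  fixes a0 a1 b0 b1 :: real
  assumes "a0 + a1 = 1" "b0 + b1 = 1"
  shows "Fxy - (a0*Fay + a1*Fby + b0*Fxc + b1*Fxd - (a0*(b0*Fac + b1*Fad) + a1*(b0*Fbc + b1*Fbd)))
   = a0*b0*(Fxy + Fac - Fay - Fxc) + a0*b1*(Fxy + Fad - Fay - Fxd) + a1*b0*(Fxy + Fbc - Fby - Fxc) + a1*b1*(Fxy + Fbd - Fby - Fxd)"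
proof -
  have a1: "a1 = 1 - a0" and b1: "b1 = 1 - b0" using assms by auto
  show ?thesis unfolding a1 b1 by (simp add: algebra_simps)
qed

lemma abs4:
  fixes p1 p2 p3 p4 R1 R2 R3 R4 :: real
  assumes "p1 \<ge> 0" "p2 \<ge> 0" "p3 \<ge> 0" "p4 \<ge> 0"
  shows "\<bar>p1*R1 + p2*R2 + p3*R3 + p4*R4\<bar> \<le> p1*\<bar>R1\<bar> + p2*\<bar>R2\<bar> + p3*\<bar>R3\<bar> + p4*\<bar>R4\<bar>"
proof -
  have tri: "\<bar>A + B + C + D\<bar> \<le> \<bar>A\<bar> + \<bar>B\<bar> + \<bar>C\<bar> + \<bar>D\<bar>" for A B C D :: real by arith
  have "\<bar>p1*R1\<bar> = p1*\<bar>R1\<bar>" "\<bar>p2*R2\<bar> = p2*\<bar>R2\<bar>" "\<bar>p3*R3\<bar> = p3*\<bar>R3\<bar>" "\<bar>p4*R4\<bar> = p4*\<bar>R4\<bar>"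
    using assms by (simp_all add: abs_mult)
  then show ?thesis using tri[of "p1*R1" "p2*R2" "p3*R3" "p4*R4"] by linarith
qed

lemma half_prod:
  fixes a b x :: real
  assumes "a \<le> x" "x \<le> b" "a < b"
  shows "2 * ((b - x) * (x - a)) / (b - a) \<le> (b - a) / 2"
    and "0 \<le> 2 * ((b - x) * (x - a)) / (b - a)"
proof -
  have "0 \<le> ((b - x) - (x - a))^2" by simp
  then have "4 * ((b - x) * (x - a)) \<le> (b - a)^2" by (simp add: power2_eq_square algebra_simps)
  then show "2 * ((b - x) * (x - a)) / (b - a) \<le> (b - a) / 2"
    using assms by (simp add: field_simps power2_eq_square)
  show "0 \<le> 2 * ((b - x) * (x - a)) / (b - a)" using assms by simp
qed

lemma err_bound:
  fixes a b c d x y K R1 R2 R3 R4 :: real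
  assumes ax: "a \<le> x" "x \<le> b" and cy: "c \<le> y" "y \<le> d" and ab: "a < b" and cd: "c < d" and K: "K \<ge> 0"
    and R1: "\<bar>R1\<bar> \<le> K*(x-a)*(y-c)" and R2: "\<bar>R2\<bar> \<le> K*(x-a)*(d-y)"
    and R3: "\<bar>R3\<bar> \<le> K*(b-x)*(y-c)" and R4: "\<bar>R4\<bar> \<le> K*(b-x)*(d-y)"
  shows "\<bar>((b-x)/(b-a))*((d-y)/(d-c))*R1 + ((b-x)/(b-a))*((y-c)/(d-c))*R2
          + ((x-a)/(b-a))*((d-y)/(d-c))*R3 + ((x-a)/(b-a))*((y-c)/(d-c))*R4\<bar> \<le> K*(b-a)*(d-c)/4"
proof -
  define p1 where "p1 = ((b-x)/(b-a))*((d-y)/(d-c))"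
  define p2 where "p2 = ((b-x)/(b-a))*((y-c)/(d-c))"
  define p3 where "p3 = ((x-a)/(b-a))*((d-y)/(d-c))"
  define p4 where "p4 = ((x-a)/(b-a))*((y-c)/(d-c))"
  have p: "p1 \<ge> 0" "p2 \<ge> 0" "p3 \<ge> 0" "p4 \<ge> 0"
    unfolding p1_def p2_def p3_def p4_def using assms by auto
  have "\<bar>p1*R1 + p2*R2 + p3*R3 + p4*R4\<bar> \<le> p1*\<bar>R1\<bar> + p2*\<bar>R2\<bar> + p3*\<bar>R3\<bar> + p4*\<bar>R4\<bar>"
    using abs4[OF p] .
  also have "\<dots> \<le> p1*(K*(x-a)*(y-c)) + p2*(K*(x-a)*(d-y)) + p3*(K*(b-x)*(y-c)) + p4*(K*(b-x)*(d-y))"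
    using p R1 R2 R3 R4 by (intro add_mono mult_left_mono) auto
  also have "\<dots> = K * (2 * ((b - x) * (x - a)) / (b - a)) * (2 * ((d - y) * (y - c)) / (d - c))"
    unfolding p1_def p2_def p3_def p4_def using ab cd by (simp add: field_simps)
  also have "\<dots> \<le> K * ((b - a) / 2) * ((d - c) / 2)"
    using half_prod[OF ax ab] half_prod[OF cy cd] K
    by (intro mult_mono) (auto intro: mult_nonneg_nonneg)
  also have "\<dots> = K*(b-a)*(d-c)/4" by simp
  finally show ?thesis unfolding p1_def p2_def p3_def p4_def .
qed

lemma coons_err:
  assumes s: "grid_lines s" and t: "grid_lines t" and E: "Ebound F K" and K: "K \<ge> 0"
    and bs: "bdd_above (range (\<lambda>i. s (i+1) - s i))" and bt: "bdd_above (range (\<lambda>i. t (i+1) - t i))"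
  shows "\<bar>coons s t F (x,y) - F (x,y)\<bar> \<le> K * (max_step s * max_step t) / 4"
proof -
  define i where "i = cell_idx s x"
  define j where "j = cell_idx t y"
  have ci: "s i \<le> x" "x < s (i+1)" using cell_idx_prop[OF s] i_def by auto
  have cj: "t j \<le> y" "y < t (j+1)" using cell_idx_prop[OF t] j_def by auto
  have h1: "s i < s (i+1)" and h2: "t j < t (j+1)" using ci cj by auto
  have eq: "F (x,y) - coons s t F (x,y) =
      ((s (i+1)-x)/(s (i+1)-s i))*((t (j+1)-y)/(t (j+1)-t j))*rectd F x (s i) y (t j)
    + ((s (i+1)-x)/(s (i+1)-s i))*((y-t j)/(t (j+1)-t j))*rectd F x (s i) y (t (j+1))
    + ((x-s i)/(s (i+1)-s i))*((t (j+1)-y)/(t (j+1)-t j))*rectd F x (s (i+1)) y (t j)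
    + ((x-s i)/(s (i+1)-s i))*((y-t j)/(t (j+1)-t j))*rectd F x (s (i+1)) y (t (j+1))"
    unfolding coons_patch i_def[symmetric] j_def[symmetric] patch_def Let_def rectd_def
    by (rule err_alg) (use h1 h2 in \<open>simp_all add: add_divide_distrib[symmetric]\<close>)
  have Eb: "\<bar>rectd F p q u v\<bar> \<le> K * \<bar>p - q\<bar> * \<bar>u - v\<bar>" for p q u v
    using E unfolding Ebound_def by blast
  have "\<bar>F (x,y) - coons s t F (x,y)\<bar> \<le> K*(s (i+1) - s i)*(t (j+1) - t j)/4"
    unfolding eq
    apply (rule err_bound)
    using ci cj K Eb[of x "s i" y "t j"] Eb[of x "s i" y "t (j+1)"] Eb[of x "s (i+1)" y "t j"]
      Eb[of x "s (i+1)" y "t (j+1)"]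
    by (auto simp: abs_of_nonneg abs_of_nonpos abs_minus_commute)
  also have "\<dots> \<le> K * (max_step s * max_step t) / 4"
  proof -
    have m1: "s (i+1) - s i \<le> max_step s" unfolding max_step_def by (rule cSUP_upper[OF UNIV_I bs])
    have m2: "t (j+1) - t j \<le> max_step t" unfolding max_step_def by (rule cSUP_upper[OF UNIV_I bt])
    have "(s (i+1) - s i) * (t (j+1) - t j) \<le> max_step s * max_step t"
      using m1 m2 h1 h2 by (intro mult_mono) auto
    then have "K * ((s (i+1) - s i) * (t (j+1) - t j)) \<le> K * (max_step s * max_step t)"
      using K by (rule mult_left_mono)
    then have "K * ((s (i+1) - s i) * (t (j+1) - t j)) / 4 \<le> K * (max_step s * max_step t) / 4"
      by (rule divide_right_mono) simp
    then show ?thesis by (simp add: mult.assoc)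
  qed
  finally show ?thesis by (simp add: abs_minus_commute)
qed



lemma W_props:
  assumes "weights_W \<alpha> \<beta>" shows "0 < \<alpha> i \<and> \<alpha> i < \<beta> i \<and> \<beta> i < 1"
proof -
  obtain \<delta> where "\<delta> > 0" "\<forall>i. \<delta> \<le> \<alpha> i \<and> \<delta> \<le> 1 - \<beta> i \<and> \<delta> \<le> \<beta> i - \<alpha> i"
    using assms unfolding weights_W_def by blast
  then show ?thesis by (metis add.commute diff_gt_0_iff_gt order_less_le_trans)
qed

lemma cc_step:
  assumes s: "grid_lines s" and W: "\<And>i. 0 < \<alpha> i \<and> \<alpha> i < \<beta> i \<and> \<beta> i < 1"
    and B: "\<And>i. s (i+1) - s i \<le> B"
    and s'_def: "s' = (\<lambda>n. if even n then (1 - \<alpha> (n div 2)) * s (n div 2) + \<alpha> (n div 2) * s (n div 2 + 1)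
        else (1 - \<beta> (n div 2)) * s (n div 2) + \<beta> (n div 2) * s (n div 2 + 1))"
  shows "grid_lines s' \<and> (\<forall>n. s' (n+1) - s' n \<le> 2 * B)"
proof -
  have inc: "s i < s (i+1)" for i using s unfolding grid_lines_def by blast
  have ev: "s' (2*i) = s i + \<alpha> i * (s (i+1) - s i)" for i
    unfolding s'_def by (simp add: algebra_simps)
  have od: "s' (2*i+1) = s i + \<beta> i * (s (i+1) - s i)" for i
  proof -
    have "(2*i+1) div 2 = i" by presburger
    moreover have "odd (2*i+1)" by simp
    ultimately show ?thesis unfolding s'_def by (simp add: algebra_simps)
  qed
  have od2: "s' (2*i+1+1) = s' (2*(i+1))" for i by (rule arg_cong[where f=s']) simp
  have steps: "s' n < s' (n+1) \<and> s' (n+1) - s' n \<le> 2 * B" for n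
  proof -
    obtain i where "n = 2*i \<or> n = 2*i+1" by (metis oddE evenE)
    then show ?thesis
    proof
      assume n: "n = 2*i"
      have d: "s' (n+1) - s' n = (\<beta> i - \<alpha> i) * (s (i+1) - s i)"
        unfolding n using ev[of i] od[of i] by (simp add: algebra_simps)
      have p: "0 < s (i+1) - s i" using inc[of i] by simp
      have "(\<beta> i - \<alpha> i) * (s (i+1) - s i) \<le> 1 * (s (i+1) - s i)"
        using W[of i] p by (intro mult_right_mono) auto
      moreover have "0 < (\<beta> i - \<alpha> i) * (s (i+1) - s i)" using W[of i] p by simp
      ultimately show ?thesis using d B[of i] by simp
    next
      assume n: "n = 2*i+1"
      have d: "s' (n+1) - s' n = (1 - \<beta> i) * (s (i+1) - s i) + \<alpha> (i+1) * (s (i+1+1) - s (i+1))"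
        unfolding n od2 using ev[of "i+1"] od[of i] by (simp add: algebra_simps)
      have p1: "0 < s (i+1) - s i" using inc[of i] by simp
      have p2: "0 < s (i+1+1) - s (i+1)" using inc[of "i+1"] by simp
      have "(1 - \<beta> i) * (s (i+1) - s i) \<le> 1 * (s (i+1) - s i)"
        using W[of i] p1 by (intro mult_right_mono) auto
      moreover have "\<alpha> (i+1) * (s (i+1+1) - s (i+1)) \<le> 1 * (s (i+1+1) - s (i+1))"
        using W[of "i+1"] p2 by (intro mult_right_mono) auto
      moreover have "0 < (1 - \<beta> i) * (s (i+1) - s i)" using W[of i] p1 by simp
      moreover have "0 < \<alpha> (i+1) * (s (i+1+1) - s (i+1))" using W[of "i+1"] p2 by simp
      ultimately show ?thesis using d B[of i] B[of "i+1"] by simp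
    qed
  qed
  have up: "\<exists>n. s' n > x" for x
  proof -
    obtain i where "s i > x" using s unfolding grid_lines_def by blast
    moreover have "0 < \<alpha> i * (s (i+1) - s i)" using W[of i] inc[of i] by simp
    ultimately show ?thesis using ev[of i] by (intro exI[of _ "2*i"]) simp
  qed
  have down: "\<exists>n. s' n < x" for x
  proof -
    obtain i where i: "s i < x" using s unfolding grid_lines_def by blast
    have e: "s' (2*(i-1)) = s i - (1 - \<alpha> (i-1)) * (s i - s (i-1))"
      using ev[of "i-1"] by (simp add: algebra_simps)
    have "0 < (1 - \<alpha> (i-1)) * (s i - s (i-1))" using W[of "i-1"] inc[of "i-1"] by simp
    then show ?thesis using e i by (intro exI[of _ "2*(i-1)"]) simp
  qed
  show ?thesis using steps up down unfolding grid_lines_def by blast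
qed

lemma cc_lines_props:
  assumes W: "\<And>k. weights_W (\<alpha> k) (\<beta> k)"
  shows "grid_lines (cc_lines \<alpha> \<beta> real_of_int k) \<and> (\<forall>i. cc_lines \<alpha> \<beta> real_of_int k (i+1) - cc_lines \<alpha> \<beta> real_of_int k i \<le> 2^k)"
proof (induction k)
  case 0
  have "grid_lines real_of_int"
    unfolding grid_lines_def
  proof (intro conjI allI)
    fix x :: real
    show "\<exists>i. real_of_int i > x" by (intro exI[of _ "\<lceil>x\<rceil> + 1"]) linarith
    show "\<exists>i. real_of_int i < x" by (intro exI[of _ "\<lfloor>x\<rfloor> - 1"]) linarith
  qed simp
  then show ?case by simp
next
  case (Suc k)
  have "grid_lines (cc_lines \<alpha> \<beta> real_of_int (Suc k)) \<and> (\<forall>n. cc_lines \<alpha> \<beta> real_of_int (Suc k) (n+1) - cc_lines \<alpha> \<beta> real_of_int (Suc k) n \<le> 2 * 2^k)"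
    by (rule cc_step[where \<alpha> = "\<alpha> k" and \<beta> = "\<beta> k" and s = "cc_lines \<alpha> \<beta> real_of_int k"])
       (use Suc W_props[OF W] in \<open>auto simp: Let_def\<close>)
  then show ?case by simp
qed



lemma coons_inner: "coons s t N p \<bullet> b = coons s t (\<lambda>q. N q \<bullet> b) p"
  by (cases p) (simp add: coons_def Let_def inner_add_left inner_diff_left)

lemma cc_net_inner: "cc_net \<alpha>s \<beta>s \<alpha>t \<beta>t s0 t0 N0 k p \<bullet> b = cc_net \<alpha>s \<beta>s \<alpha>t \<beta>t s0 t0 (\<lambda>q. N0 q \<bullet> b) k p"
  by (induction k arbitrary: p) (simp_all add: coons_inner)

lemma E_G: "Ebound F M \<Longrightarrow> Gbound s t F M"
  unfolding Ebound_def Gbound_def by blast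

lemma rect_from_dd:
  fixes N :: "real \<times> real \<Rightarrow> 'a::euclidean_space"
  assumes "infnorm (div_diff \<sigma>1 \<sigma>2 \<tau>1 \<tau>2 N) \<le> L" "b \<in> Basis" "\<sigma>1 \<noteq> \<sigma>2" "\<tau>1 \<noteq> \<tau>2"
  shows "\<bar>rectd (\<lambda>q. N q \<bullet> b) \<sigma>1 \<sigma>2 \<tau>1 \<tau>2\<bar> \<le> L * \<bar>\<sigma>1 - \<sigma>2\<bar> * \<bar>\<tau>1 - \<tau>2\<bar>"
proof -
  have nz: "(\<sigma>1 - \<sigma>2) * (\<tau>1 - \<tau>2) \<noteq> 0" using assms by simp
  have e: "div_diff \<sigma>1 \<sigma>2 \<tau>1 \<tau>2 N \<bullet> b = rectd (\<lambda>q. N q \<bullet> b) \<sigma>1 \<sigma>2 \<tau>1 \<tau>2 / ((\<sigma>1 - \<sigma>2) * (\<tau>1 - \<tau>2))"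
    by (simp add: div_diff_def rectd_def inner_add_left inner_diff_left)
  have "\<bar>div_diff \<sigma>1 \<sigma>2 \<tau>1 \<tau>2 N \<bullet> b\<bar> \<le> L"
    using Basis_le_infnorm[OF assms(2)] assms(1) by (rule order_trans)
  then have "\<bar>rectd (\<lambda>q. N q \<bullet> b) \<sigma>1 \<sigma>2 \<tau>1 \<tau>2\<bar> / (\<bar>\<sigma>1 - \<sigma>2\<bar> * \<bar>\<tau>1 - \<tau>2\<bar>) \<le> L"
    unfolding e by (simp add: abs_mult)
  then show ?thesis using nz by (simp add: divide_le_eq abs_mult mult_ac)
qed

lemma bmsdd_G:
  fixes N0 :: "real \<times> real \<Rightarrow> 'a::euclidean_space"
  assumes B: "BMSDD real_of_int real_of_int N0 L" and b: "b \<in> Basis"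
  shows "Gbound real_of_int real_of_int (\<lambda>q. N0 q \<bullet> b) L"
proof -
  have gen: "\<bar>rectd (\<lambda>q. N0 q \<bullet> b) \<sigma>1 \<sigma>2 \<tau>1 \<tau>2\<bar> \<le> L * \<bar>\<sigma>1 - \<sigma>2\<bar> * \<bar>\<tau>1 - \<tau>2\<bar>"
    if g: "(\<sigma>1, \<tau>1) \<in> grid real_of_int real_of_int" "(\<sigma>1, \<tau>2) \<in> grid real_of_int real_of_int"
      "(\<sigma>2, \<tau>1) \<in> grid real_of_int real_of_int" "(\<sigma>2, \<tau>2) \<in> grid real_of_int real_of_int"
    for \<sigma>1 \<sigma>2 \<tau>1 \<tau>2
  proof (cases "\<sigma>1 = \<sigma>2 \<or> \<tau>1 = \<tau>2")
    case True then show ?thesis by (auto simp: rectd_def)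
  next
    case False
    then have "infnorm (div_diff \<sigma>1 \<sigma>2 \<tau>1 \<tau>2 N0) \<le> L" using B g unfolding BMSDD_def by blast
    then show ?thesis using rect_from_dd[OF _ b] False by blast
  qed
  show ?thesis unfolding Gbound_def
    by (intro conjI allI gen) (auto simp: grid_def)
qed

theorem theorem4:
  fixes N0 :: "real \<times> real \<Rightarrow> 'a::euclidean_space"
    and \<alpha>s \<beta>s \<alpha>t \<beta>t :: "nat \<Rightarrow> int \<Rightarrow> real"
    and L :: real and k :: nat
  assumes "net_C0 real_of_int real_of_int N0"
    and "BMSDD real_of_int real_of_int N0 L"
    and "\<And>k. weights_W (\<alpha>s k) (\<beta>s k)"
    and "\<And>k. weights_W (\<alpha>t k) (\<beta>t k)"
  shows "\<forall>x y. infnorm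
      (coons (cc_lines \<alpha>s \<beta>s real_of_int (Suc k)) (cc_lines \<alpha>t \<beta>t real_of_int (Suc k))
         (cc_net \<alpha>s \<beta>s \<alpha>t \<beta>t real_of_int real_of_int N0 (Suc k)) (x, y)
     - coons (cc_lines \<alpha>s \<beta>s real_of_int k) (cc_lines \<alpha>t \<beta>t real_of_int k)
         (cc_net \<alpha>s \<beta>s \<alpha>t \<beta>t real_of_int real_of_int N0 k) (x, y))
    \<le> 3 ^ (k + 1) * L * (max_step (cc_lines \<alpha>s \<beta>s real_of_int (Suc k))
                          * max_step (cc_lines \<alpha>t \<beta>t real_of_int (Suc k))) / 4"
proof (intro allI)
  fix x y
  let ?S = "cc_lines \<alpha>s \<beta>s real_of_int"
  let ?T = "cc_lines \<alpha>t \<beta>t real_of_int"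
  let ?C = "3 ^ (k + 1) * L * (max_step (?S (Suc k)) * max_step (?T (Suc k))) / 4"
  have Sg: "grid_lines (?S m)" and Sb: "\<forall>i. ?S m (i+1) - ?S m i \<le> 2^m" for m
    using cc_lines_props[of \<alpha>s \<beta>s m, OF assms(3)] by blast+
  have Tg: "grid_lines (?T m)" and Tb: "\<forall>i. ?T m (i+1) - ?T m i \<le> 2^m" for m
    using cc_lines_props[of \<alpha>t \<beta>t m, OF assms(4)] by blast+
  have bS: "bdd_above (range (\<lambda>i. ?S m (i+1) - ?S m i))" for m
    using Sb[of m] by (intro bdd_aboveI2) blast
  have bT: "bdd_above (range (\<lambda>i. ?T m (i+1) - ?T m i))" for m
    using Tb[of m] by (intro bdd_aboveI2) blast
  have L0: "L \<ge> 0"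
  proof -
    have "(0::real, 0::real) \<in> grid real_of_int real_of_int" "(0::real, 1::real) \<in> grid real_of_int real_of_int"
      "(1::real, 0::real) \<in> grid real_of_int real_of_int" "(1::real, 1::real) \<in> grid real_of_int real_of_int"
      unfolding grid_def by (auto intro: exI[of _ 0] exI[of _ 1])
    then have "infnorm (div_diff 0 1 0 1 N0) \<le> L" using assms(2) unfolding BMSDD_def by force
    then show ?thesis using infnorm_pos_le[of "div_diff 0 1 0 1 N0"] by linarith
  qed
  have comp: "\<bar>(coons (?S (Suc k)) (?T (Suc k)) (cc_net \<alpha>s \<beta>s \<alpha>t \<beta>t real_of_int real_of_int N0 (Suc k)) (x, y)
     - coons (?S k) (?T k) (cc_net \<alpha>s \<beta>s \<alpha>t \<beta>t real_of_int real_of_int N0 k) (x, y)) \<bullet> b\<bar> \<le> ?C"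
    if b: "b \<in> Basis" for b
  proof -
    let ?Nb = "\<lambda>q. N0 q \<bullet> b"
    let ?net = "cc_net \<alpha>s \<beta>s \<alpha>t \<beta>t real_of_int real_of_int ?Nb"
    have G: "Gbound (?S m) (?T m) (?net m) (3^m * L)" for m
    proof (induction m)
      case 0 then show ?case using bmsdd_G[OF assms(2) b] by simp
    next
      case (Suc m)
      have "Ebound (coons (?S m) (?T m) (?net m)) (3 * (3^m * L))"
        by (rule coons_Ebound[OF Sg Tg Suc])
      then show ?case by (intro E_G) (simp add: mult.assoc)
    qed
    have E: "Ebound (?net (Suc k)) (3^(k+1) * L)"
      using coons_Ebound[OF Sg Tg G[of k]] by (simp add: mult.assoc)
    have K: "0 \<le> 3^(k+1) * L" using L0 by simp
    have main: "\<bar>coons (?S (Suc k)) (?T (Suc k)) (?net (Suc k)) (x,y) - ?net (Suc k) (x,y)\<bar> \<le> ?C"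
      by (rule coons_err[OF Sg[of "Suc k"] Tg[of "Suc k"] E K bS[of "Suc k"] bT[of "Suc k"]])
    have eqB: "coons (?S k) (?T k) (cc_net \<alpha>s \<beta>s \<alpha>t \<beta>t real_of_int real_of_int N0 k) (x,y) \<bullet> b = ?net (Suc k) (x,y)"
      by (simp add: coons_inner cc_net_inner del: cc_lines.simps)
    have eqA: "coons (?S (Suc k)) (?T (Suc k)) (cc_net \<alpha>s \<beta>s \<alpha>t \<beta>t real_of_int real_of_int N0 (Suc k)) (x,y) \<bullet> b
        = coons (?S (Suc k)) (?T (Suc k)) (?net (Suc k)) (x,y)"
      by (simp only: coons_inner cc_net_inner)
    show ?thesis by (simp only: inner_diff_left eqA eqB main)
  qed
  show "infnorm (coons (?S (Suc k)) (?T (Suc k)) (cc_net \<alpha>s \<beta>s \<alpha>t \<beta>t real_of_int real_of_int N0 (Suc k)) (x, y)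
     - coons (?S k) (?T k) (cc_net \<alpha>s \<beta>s \<alpha>t \<beta>t real_of_int real_of_int N0 k) (x, y)) \<le> ?C"
    unfolding infnorm_Max
  proof (rule Max.boundedI)
    show "finite ((\<lambda>i. \<bar>(coons (?S (Suc k)) (?T (Suc k)) (cc_net \<alpha>s \<beta>s \<alpha>t \<beta>t real_of_int real_of_int N0 (Suc k)) (x, y)
     - coons (?S k) (?T k) (cc_net \<alpha>s \<beta>s \<alpha>t \<beta>t real_of_int real_of_int N0 k) (x, y)) \<bullet> i\<bar>) ` Basis)"
      by (rule finite_imageI) simp
  next
    show "(\<lambda>i. \<bar>(coons (?S (Suc k)) (?T (Suc k)) (cc_net \<alpha>s \<beta>s \<alpha>t \<beta>t real_of_int real_of_int N0 (Suc k)) (x, y)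
     - coons (?S k) (?T k) (cc_net \<alpha>s \<beta>s \<alpha>t \<beta>t real_of_int real_of_int N0 k) (x, y)) \<bullet> i\<bar>) ` Basis \<noteq> {}"
      by (simp only: image_is_empty nonempty_Basis not_False_eq_True)
  next
    fix a assume "a \<in> (\<lambda>i. \<bar>(coons (?S (Suc k)) (?T (Suc k)) (cc_net \<alpha>s \<beta>s \<alpha>t \<beta>t real_of_int real_of_int N0 (Suc k)) (x, y)
     - coons (?S k) (?T k) (cc_net \<alpha>s \<beta>s \<alpha>t \<beta>t real_of_int real_of_int N0 k) (x, y)) \<bullet> i\<bar>) ` Basis"
    then obtain b where "b \<in> Basis" and a: "a = \<bar>(coons (?S (Suc k)) (?T (Suc k)) (cc_net \<alpha>s \<beta>s \<alpha>t \<beta>t real_of_int real_of_int N0 (Suc k)) (x, y)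
     - coons (?S k) (?T k) (cc_net \<alpha>s \<beta>s \<alpha>t \<beta>t real_of_int real_of_int N0 k) (x, y)) \<bullet> b\<bar>"
      by (rule imageE)
    show "a \<le> ?C" unfolding a by (rule comp) fact
  qed
qed

end
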